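(* Let $(t_j^i)_{0\le j\le i}$ be real numbers and let $h_{j,k}^i$ ($0\le k\le i$, $0\le j\le i-k$) be defined by $h_{j,0}^i=t_j^i$ and $h_{j,k}^i=h_{j,k-1}^{i-1}+h_{j,k-1}^{i}+h_{j+1,k-1}^{i}$ for $k\ge 1$. Then for any $0\leq k \leq i$, $0\leq j \leq i-k$, $$h^i_{j,k}=\sum_{r=i-k}^{i} \sum_{s=j}^{j+k-i+r} \binom{k}{s-j,\,i-r,\,k+j+r-s-i} t_{s}^{r}.$$
   Context: For non-negative integers $p,q,r$ with $p+q+r=n$, $\binom{n}{p,q,r}=\frac{n!}{p!\,q!\,r!}$ denotes the tetrahedron trinomial coefficient. *)

theory Defs
  imports Complex_Main
begin

text \<open>Trinomial coefficient n!/(p! q! r!), used only when p + q + r = n.\<close>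
definition trinom :: "nat \<Rightarrow> nat \<Rightarrow> nat \<Rightarrow> nat \<Rightarrow> real" where
  "trinom n p q r = fact n / (fact p * fact q * fact r)"

text \<open>hh t i j k = h^i_{j,k}, where t i j = t^i_j.\<close>
fun hh :: "(nat \<Rightarrow> nat \<Rightarrow> real) \<Rightarrow> nat \<Rightarrow> nat \<Rightarrow> nat \<Rightarrow> real" where
  "hh t i j 0 = t i j"
| "hh t i j (Suc k) = hh t (i - 1) j k + hh t i j k + hh t i (j + 1) k"

end

theory Submission
  imports Defs
begin

definition CC :: "nat \<Rightarrow> nat \<Rightarrow> nat \<Rightarrow> real" where
  "CC k a b = (if a + b \<le> k then trinom k a b (k - a - b) else 0)"

lemma fact_pos_shift: "(if x > 0 then 1 / fact (x - 1) else 0) = real x / (fact x :: real)"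
proof (cases x)
  case (Suc y)
  have "fact (Suc y) = real (Suc y) * (fact y :: real)" by simp
  then show ?thesis using Suc by (simp del: of_nat_Suc fact_Suc)
qed simp

lemma tri_pascal:
  assumes "a + b + c = Suc k"
  shows "trinom (Suc k) a b c =
    (if a > 0 then trinom k (a - 1) b c else 0) +
    (if b > 0 then trinom k a (b - 1) c else 0) +
    (if c > 0 then trinom k a b (c - 1) else 0)"
proof -
  have e1: "(if a > 0 then trinom k (a - 1) b c else 0) =
      fact k / (fact b * fact c) * (if a > 0 then 1 / fact (a - 1) else 0)"
    by (simp add: trinom_def)
  have e2: "(if b > 0 then trinom k a (b - 1) c else 0) =
      fact k / (fact a * fact c) * (if b > 0 then 1 / fact (b - 1) else 0)"
    by (simp add: trinom_def)
  have e3: "(if c > 0 then trinom k a b (c - 1) else 0) =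
      fact k / (fact a * fact b) * (if c > 0 then 1 / fact (c - 1) else 0)"
    by (simp add: trinom_def)
  have "real a + real b + real c = real (Suc k)" using assms by linarith
  then have "trinom (Suc k) a b c = fact k / (fact a * fact b * fact c) * (real a + real b + real c)"
    by (simp add: trinom_def field_simps)
  also have "\<dots> = fact k / (fact b * fact c) * (real a / fact a) +
      fact k / (fact a * fact c) * (real b / fact b) +
      fact k / (fact a * fact b) * (real c / fact c)"
    by (simp add: field_simps)
  finally show ?thesis unfolding e1 e2 e3 fact_pos_shift .
qed

lemma CC_pascal:
  "CC (Suc k) a b = (if a > 0 then CC k (a - 1) b else 0) + CC k a b +
     (if b > 0 then CC k a (b - 1) else 0)"
proof (cases "a + b \<le> Suc k")
  case True
  have t: "trinom (Suc k) a b (Suc k - a - b) =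
    (if a > 0 then trinom k (a - 1) b (Suc k - a - b) else 0) +
    (if b > 0 then trinom k a (b - 1) (Suc k - a - b) else 0) +
    (if Suc k - a - b > 0 then trinom k a b (Suc k - a - b - 1) else 0)"
    by (rule tri_pascal) (use True in simp)
  show ?thesis
  proof (cases "a + b \<le> k")
    case True2: True
    have "Suc k - a - b - 1 = k - a - b" by simp
    moreover have "a > 0 \<Longrightarrow> k - (a - 1) - b = Suc k - a - b" using True2 by simp
    moreover have "b > 0 \<Longrightarrow> k - a - (b - 1) = Suc k - a - b" using True2 by simp
    ultimately show ?thesis using True True2 t unfolding CC_def by auto
  next
    case False
    then have ab: "a + b = Suc k" using True by simp
    have "a > 0 \<Longrightarrow> k - (a - 1) - b = 0" using ab by simp
    moreover have "b > 0 \<Longrightarrow> k - a - (b - 1) = 0" using ab by simp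
    ultimately show ?thesis using True False t ab unfolding CC_def by auto
  qed
next
  case False
  then show ?thesis unfolding CC_def by auto
qed

lemma CC_out: "a > k \<or> b > k \<Longrightarrow> CC k a b = 0"
  unfolding CC_def by auto

lemma main:
  "k \<le> A \<Longrightarrow> k \<le> B \<Longrightarrow>
   hh t i j k = (\<Sum>a\<le>A. \<Sum>b\<le>B. CC k a b * t (i - b) (j + a))"
proof (induction k arbitrary: i j A B)
  case 0
  have "(\<Sum>a\<le>A. \<Sum>b\<le>B. CC 0 a b * t (i - b) (j + a)) =
        (\<Sum>a\<le>A. if a = 0 then t i j else 0)"
  proof (rule sum.cong[OF refl])
    fix a assume "a \<in> {..A}"
    have "(\<Sum>b\<le>B. CC 0 a b * t (i - b) (j + a)) = (\<Sum>b\<le>B. if b = 0 \<and> a = 0 then t i j else 0)"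
      by (rule sum.cong) (auto simp: CC_def trinom_def)
    then show "(\<Sum>b\<le>B. CC 0 a b * t (i - b) (j + a)) = (if a = 0 then t i j else 0)"
      by (simp add: sum.delta)
  qed
  then show ?case by (simp add: sum.delta)
next
  case (Suc k)
  obtain A' where A: "A = Suc A'" using Suc.prems by (cases A) auto
  obtain B' where B: "B = Suc B'" using Suc.prems by (cases B) auto
  have "(\<Sum>a\<le>A. \<Sum>b\<le>B. CC (Suc k) a b * t (i - b) (j + a)) =
     (\<Sum>a\<le>A. \<Sum>b\<le>B. (if a > 0 then CC k (a - 1) b else 0) * t (i - b) (j + a)) +
     (\<Sum>a\<le>A. \<Sum>b\<le>B. CC k a b * t (i - b) (j + a)) +
     (\<Sum>a\<le>A. \<Sum>b\<le>B. (if b > 0 then CC k a (b - 1) else 0) * t (i - b) (j + a))"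
    by (simp add: CC_pascal distrib_right sum.distrib)
  also have "(\<Sum>a\<le>A. \<Sum>b\<le>B. CC k a b * t (i - b) (j + a)) = hh t i j k"
    using Suc.IH[of A B i j] Suc.prems by simp
  also have "(\<Sum>a\<le>A. \<Sum>b\<le>B. (if a > 0 then CC k (a - 1) b else 0) * t (i - b) (j + a))
     = (\<Sum>a\<le>A'. \<Sum>b\<le>B. CC k a b * t (i - b) ((j + 1) + a))"
    unfolding A sum.atMost_Suc_shift by simp
  also have "\<dots> = hh t i (j + 1) k" using Suc.IH[of A' B i "j+1"] Suc.prems A by simp
  also have "(\<Sum>a\<le>A. \<Sum>b\<le>B. (if b > 0 then CC k a (b - 1) else 0) * t (i - b) (j + a))
     = (\<Sum>a\<le>A. \<Sum>b\<le>B'. CC k a b * t (i - 1 - b) (j + a))"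
    unfolding B sum.atMost_Suc_shift by simp
  also have "\<dots> = hh t (i - 1) j k" using Suc.IH[of A B' "i - 1" j] Suc.prems B by simp
  finally show ?case by simp
qed

theorem corollary3:
  fixes t :: "nat \<Rightarrow> nat \<Rightarrow> real" and i j k :: nat
  assumes "k \<le> i" and "j \<le> i - k"
  shows "hh t i j k =
    (\<Sum>r = i - k..i. \<Sum>s = j..j + k + r - i.
       trinom k (s - j) (i - r) (k + j + r - s - i) * t r s)"
proof -
  have "hh t i j k = (\<Sum>a\<le>k. \<Sum>b\<le>k. CC k a b * t (i - b) (j + a))"
    by (rule main) auto
  also have "\<dots> = (\<Sum>b\<le>k. \<Sum>a\<le>k. CC k a b * t (i - b) (j + a))"
    by (rule sum.swap)
  also have "\<dots> = (\<Sum>b\<le>k. \<Sum>a\<le>k - b. trinom k a b (k - a - b) * t (i - b) (j + a))"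
  proof (rule sum.cong[OF refl])
    fix b assume b: "b \<in> {..k}"
    have "(\<Sum>a\<le>k. CC k a b * t (i - b) (j + a)) = (\<Sum>a\<le>k - b. CC k a b * t (i - b) (j + a))"
      using b by (intro sum.mono_neutral_right) (auto simp: CC_def)
    also have "\<dots> = (\<Sum>a\<le>k - b. trinom k a b (k - a - b) * t (i - b) (j + a))"
      using b by (intro sum.cong) (auto simp: CC_def)
    finally show "(\<Sum>a\<le>k. CC k a b * t (i - b) (j + a)) = \<dots>" .
  qed
  also have "\<dots> = (\<Sum>r = i - k..i. \<Sum>a\<le>k - (i - r). trinom k a (i - r) (k - a - (i - r)) * t r (j + a))"
    by (rule sum.reindex_bij_witness[where i="\<lambda>r. i - r" and j="\<lambda>b. i - b"])
       (use assms in auto)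
  also have "\<dots> = (\<Sum>r = i - k..i. \<Sum>s = j..j + k + r - i.
       trinom k (s - j) (i - r) (k + j + r - s - i) * t r s)"
  proof (rule sum.cong[OF refl])
    fix r assume r: "r \<in> {i - k..i}"
    show "(\<Sum>a\<le>k - (i - r). trinom k a (i - r) (k - a - (i - r)) * t r (j + a)) =
      (\<Sum>s = j..j + k + r - i. trinom k (s - j) (i - r) (k + j + r - s - i) * t r s)"
      by (rule sum.reindex_bij_witness[where i="\<lambda>s. s - j" and j="\<lambda>a. j + a"])
         (use r assms in auto)
  qed
  finally show ?thesis .
qed

end
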